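(* Let $S$ and $T$ be disjoint nonempty finite sets, and suppose $L=M\mathbin{\Box} N=P\mathbin{\Box} Q$, where $M$ is a matroid on $S$, $N$ a matroid on $T$, $P$ a matroid on $T$ and $Q$ a matroid on $S$. Then $L$ is a uniform matroid.
   Context: For a matroid $M$ on $S$ write $\rho_M$ for rank, $\rho(M)=\rho_M(S)$, $\nu_M(A)=|A|-\rho_M(A)$, $\lambda_M(A)=\rho(M)-\rho_M(A)$. For matroids $M$ on $S$ and $N$ on $T$ with $S\cap T=\emptyset$, the free product $M\mathbin{\Box} N$ is the matroid on $S\cup T$ whose independent sets are those $A$ with $A\cap S$ independent in $M$ and $\lambda_M(A\cap S)\geq\nu_N(A\cap T)$. *)

theory Defs
  imports Main
begin

definition matroid :: "'a set \<Rightarrow> ('a set \<Rightarrow> bool) \<Rightarrow> bool" where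
  "matroid E indep \<longleftrightarrow>
     finite E \<and> indep {} \<and> (\<forall>X. indep X \<longrightarrow> X \<subseteq> E) \<and>
     (\<forall>X Y. indep X \<and> Y \<subseteq> X \<longrightarrow> indep Y) \<and>
     (\<forall>X Y. indep X \<and> indep Y \<and> card X < card Y \<longrightarrow> (\<exists>y\<in>Y - X. indep (insert y X)))"

definition rk :: "('a set \<Rightarrow> bool) \<Rightarrow> 'a set \<Rightarrow> nat" where
  "rk indep A = Max {card X | X. X \<subseteq> A \<and> indep X}"

definition nullity :: "('a set \<Rightarrow> bool) \<Rightarrow> 'a set \<Rightarrow> int" where
  "nullity indep A = int (card A) - int (rk indep A)"

definition corank_gap :: "'a set \<Rightarrow> ('a set \<Rightarrow> bool) \<Rightarrow> 'a set \<Rightarrow> int" where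
  "corank_gap E indep A = int (rk indep E) - int (rk indep A)"

definition free_product ::
  "'a set \<Rightarrow> ('a set \<Rightarrow> bool) \<Rightarrow> 'a set \<Rightarrow> ('a set \<Rightarrow> bool) \<Rightarrow> 'a set \<Rightarrow> bool" where
  "free_product S M T N A \<longleftrightarrow>
     A \<subseteq> S \<union> T \<and> M (A \<inter> S) \<and> corank_gap S M (A \<inter> S) \<ge> nullity N (A \<inter> T)"

definition uniform_matroid :: "'a set \<Rightarrow> ('a set \<Rightarrow> bool) \<Rightarrow> bool" where
  "uniform_matroid E indep \<longleftrightarrow> (\<exists>r::nat. \<forall>A. indep A \<longleftrightarrow> A \<subseteq> E \<and> card A \<le> r)"

end

theory Submission
  imports Defs
begin

lemma rk_set_finite: "finite X \<Longrightarrow> finite {card Y | Y. Y \<subseteq> X \<and> I Y}"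
proof -
  assume "finite X"
  have "{card Y | Y. Y \<subseteq> X \<and> I Y} \<subseteq> card ` Pow X" by auto
  then show ?thesis using \<open>finite X\<close> finite_subset by blast
qed

lemma rk_obtain0:
  assumes "finite X" "Z0 \<subseteq> X" "I Z0"
  obtains Z where "Z \<subseteq> X" "I Z" "card Z = rk I X"
proof -
  have ne: "{card Y | Y. Y \<subseteq> X \<and> I Y} \<noteq> {}" using assms by blast
  have "rk I X \<in> {card Y | Y. Y \<subseteq> X \<and> I Y}"
    unfolding rk_def by (rule Max_in[OF rk_set_finite[OF assms(1)] ne])
  then obtain Z where "Z \<subseteq> X" "I Z" "rk I X = card Z" by blast
  then show ?thesis using that by simp
qed

lemma rk_obtain:
  assumes "finite X" "I {}"
  obtains Z where "Z \<subseteq> X" "I Z" "card Z = rk I X"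
  using rk_obtain0[of X "{}" I] assms by blast

lemma rk_ge:
  assumes "finite X" "Z \<subseteq> X" "I Z"
  shows "card Z \<le> rk I X"
  unfolding rk_def
  by (rule Max_ge[OF rk_set_finite[OF assms(1)]]) (use assms(2,3) in blast)

lemma rk_le_card:
  assumes "finite X" "I {}"
  shows "rk I X \<le> card X"
proof -
  obtain Z where Z: "Z \<subseteq> X" "I Z" "card Z = rk I X" using rk_obtain[of X I, OF assms] by blast
  have "card Z \<le> card X" by (rule card_mono[OF assms(1) Z(1)])
  then show ?thesis using Z(3) by simp
qed

lemma rk_indep:
  assumes "finite X" "I X"
  shows "rk I X = card X"
proof -
  obtain Z where Z: "Z \<subseteq> X" "I Z" "card Z = rk I X"
    using rk_obtain0[of X X I, OF assms(1) subset_refl assms(2)] by blast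
  have "card Z \<le> card X" by (rule card_mono[OF assms(1) Z(1)])
  moreover have "card X \<le> rk I X" by (rule rk_ge[of X X I, OF assms(1) subset_refl assms(2)])
  ultimately show ?thesis using Z(3) by linarith
qed

lemma rk_mono:
  assumes "finite Y" "X \<subseteq> Y" "I {}"
  shows "rk I X \<le> rk I Y"
proof -
  have fX: "finite X" using assms(1,2) by (rule finite_subset[rotated])
  obtain Z where Z: "Z \<subseteq> X" "I Z" "card Z = rk I X" using rk_obtain[of X I, OF fX assms(3)] by blast
  have "Z \<subseteq> Y" using Z(1) assms(2) by (rule subset_trans)
  from rk_ge[of Y Z I, OF assms(1) this Z(2)] show ?thesis using Z(3) by simp
qed

lemma rk_eq_card:
  assumes "finite X" "I {}" "rk I X = card X"
  shows "I X"
proof -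
  obtain Z where Z: "Z \<subseteq> X" "I Z" "card Z = rk I X" using rk_obtain[of X I, OF assms(1,2)] by blast
  have "Z = X" by (rule card_subset_eq[OF assms(1) Z(1)]) (use Z(3) assms(3) in simp)
  then show ?thesis using Z(2) by simp
qed

lemma rk_empty: "I {} \<Longrightarrow> rk I {} = 0"
  using rk_indep[of "{}" I] by simp

lemma card_split:
  assumes "finite A" "A \<subseteq> S \<union> T" "S \<inter> T = {}"
  shows "card A = card (A \<inter> S) + card (A \<inter> T)"
proof -
  have e: "A = (A \<inter> S) \<union> (A \<inter> T)" using assms(2) by blast
  have "card ((A \<inter> S) \<union> (A \<inter> T)) = card (A \<inter> S) + card (A \<inter> T)"
    by (rule card_Un_disjoint) (use assms in auto)
  then show ?thesis using e by simp
qed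

lemma circuit_exists:
  assumes "finite X" "I {}" "\<not> I X"
  shows "\<exists>C\<subseteq>X. \<not> I C \<and> (\<exists>c\<in>C. I (C - {c}))"
  using assms(1,3)
proof (induction X rule: finite_psubset_induct)
  case (psubset X)
  have "X \<noteq> {}" using psubset.prems assms(2) by metis
  then obtain x where x: "x \<in> X" by blast
  show ?case
  proof (cases "I (X - {x})")
    case True
    have "X \<subseteq> X \<and> \<not> I X \<and> (\<exists>c\<in>X. I (X - {c}))" using True x psubset.prems by blast
    then show ?thesis by (rule exI)
  next
    case False
    have "X - {x} \<subset> X" using x by blast
    then have "\<exists>C\<subseteq>X - {x}. \<not> I C \<and> (\<exists>c\<in>C. I (C - {c}))" using psubset.IH False by blast
    then obtain C where "C \<subseteq> X - {x}" "\<not> I C \<and> (\<exists>c\<in>C. I (C - {c}))" by blast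
    then show ?thesis by blast
  qed
qed

lemma matroid_props:
  assumes "matroid E I"
  shows "finite E" "I {}" "\<And>X. I X \<Longrightarrow> X \<subseteq> E" "\<And>X Y. I X \<Longrightarrow> Y \<subseteq> X \<Longrightarrow> I Y"
  using assms unfolding matroid_def by simp_all

lemma key:
  assumes fin: "finite S" "finite T" and disj: "S \<inter> T = {}"
    and mM: "matroid S M" and mN: "matroid T N" and mP: "matroid T P" and mQ: "matroid S Q"
    and L1: "L = free_product S M T N" and L2: "L = free_product T P S Q"
    and C: "C \<subseteq> S" "\<not> M C" "c \<in> C" "M (C - {c})"
    and t: "t \<in> T"
  shows "\<not> N {t} \<and> card (C - {c}) = rk M S"
proof -
  define D where "D = C - {c}"
  have finC: "finite C" using C fin finite_subset by blast
  have finD: "finite D" using finC D_def by simp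
  have cardC: "card C = card D + 1" using C finC D_def
    by (metis Suc_eq_plus1 card.remove)
  have P0: "P {}" using matroid_props[OF mP] by blast
  have Q0: "Q {}" using matroid_props[OF mQ] by blast
  have M0: "M {}" using matroid_props[OF mM] by blast
  have N0: "N {}" using matroid_props[OF mN] by blast
  have CT: "C \<inter> T = {}" using C disj by blast
  have CS: "C \<inter> S = C" using C by blast
  have "\<not> L C" using L1 C(2) CS unfolding free_product_def by simp
  then have "\<not> (corank_gap T P {} \<ge> nullity Q C)"
    using L2 CT CS C(1) P0 unfolding free_product_def by auto
  then have h1: "int (rk P T) < int (card C) - int (rk Q C)"
    unfolding corank_gap_def nullity_def using rk_empty[of P, OF P0] by simp
  have "rk Q D \<le> rk Q C" using rk_mono[of C _ Q, OF finC _ Q0] D_def by auto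
  then have h2: "int (rk P T) \<le> int (card D) - int (rk Q D)" using h1 cardC by simp
  have DS: "D \<subseteq> S" using C D_def by auto
  have iS: "insert t D \<inter> S = D" using DS t disj by blast
  have iT: "insert t D \<inter> T = {t}" using DS t disj by blast
  have nL: "\<not> L (insert t D)"
  proof
    assume "L (insert t D)"
    then have "free_product T P S Q (insert t D)" using L2 by simp
    then have "P {t} \<and> corank_gap T P {t} \<ge> nullity Q D"
      unfolding free_product_def iS iT by blast
    moreover have "rk P {t} = 1" if "P {t}" using rk_indep[of "{t}" P] that by simp
    ultimately show False using h2 unfolding corank_gap_def nullity_def by auto
  qed
  have "M D" using C D_def by simp
  have "insert t D \<subseteq> S \<union> T" using DS t by blast
  then have h3: "\<not> (corank_gap S M D \<ge> nullity N {t})"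
    using nL \<open>M D\<close> unfolding L1 free_product_def iS iT by blast
  have rD: "rk M D = card D" using rk_indep[of D M, OF finD \<open>M D\<close>] .
  have "rk M D \<le> rk M S" using rk_mono[of S D M, OF fin(1) DS M0] .
  then have "rk N {t} = 0 \<and> card D = rk M S" using h3 rD unfolding corank_gap_def nullity_def by auto
  moreover have "rk N {t} = 1" if "N {t}" using rk_indep[of "{t}" N] that by simp
  ultimately show ?thesis using D_def by auto
qed

lemma key_rank0:
  assumes fin: "finite S" "finite T" and disj: "S \<inter> T = {}" and Tne: "T \<noteq> {}"
    and mM: "matroid S M" and mN: "matroid T N" and mP: "matroid T P" and mQ: "matroid S Q"
    and L1: "L = free_product S M T N" and L2: "L = free_product T P S Q"
    and C: "C \<subseteq> S" "\<not> M C" "c \<in> C" "M (C - {c})"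
  shows "rk N T = 0 \<and> card (C - {c}) = rk M S"
proof -
  obtain t where t: "t \<in> T" using Tne by auto
  have c1: "card (C - {c}) = rk M S" using key[OF assms(1-3) assms(5-) t] by blast
  have sing: "\<not> N {t'}" if "t' \<in> T" for t' using key[OF assms(1-3) assms(5-) that] by blast
  have N0: "N {}" using matroid_props[OF mN] by blast
  obtain Z where Z: "Z \<subseteq> T" "N Z" "card Z = rk N T" using rk_obtain[of T N, OF fin(2) N0] by blast
  have "Z = {}"
  proof (rule ccontr)
    assume "Z \<noteq> {}"
    then obtain z where "z \<in> Z" by auto
    then have "N {z}" using matroid_props(4)[OF mN Z(2)] by auto
    then show False using sing Z(1) \<open>z \<in> Z\<close> by auto
  qed
  then show ?thesis using Z c1 by simp
qed

lemma case_zero: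
  assumes fin: "finite S" "finite T" and disj: "S \<inter> T = {}" and Tne: "T \<noteq> {}"
    and mM: "matroid S M" and mN: "matroid T N" and mP: "matroid T P" and mQ: "matroid S Q"
    and L1: "L = free_product S M T N" and L2: "L = free_product T P S Q"
    and n0: "rk N T = 0"
  shows "\<forall>A. L A \<longleftrightarrow> A \<subseteq> S \<union> T \<and> card A \<le> rk M S"
proof -
  have M0: "M {}" using matroid_props[OF mM] by blast
  have N0: "N {}" using matroid_props[OF mN] by blast
  have unif: "M X" if "X \<subseteq> S" "card X \<le> rk M S" for X
  proof (rule ccontr)
    assume "\<not> M X"
    have "finite X" using that fin finite_subset by blast
    from circuit_exists[of X M, OF this M0 \<open>\<not> M X\<close>] obtain C c where
      Cc: "C \<subseteq> X" "\<not> M C" "c \<in> C" "M (C - {c})" by blast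
    have "card (C - {c}) = rk M S" using key_rank0[OF assms(1-10) subset_trans[OF Cc(1) that(1)] Cc(2-4)] by blast
    moreover have "finite C" using Cc \<open>finite X\<close> finite_subset by blast
    moreover have "card C \<le> card X" using card_mono[OF \<open>finite X\<close> Cc(1)] .
    moreover have "card C = card (C - {c}) + 1" using Cc(3) \<open>finite C\<close>
      using card_Diff1_less[of C c] card_Diff_singleton[of c C] by linarith
    ultimately show False using that by linarith
  qed
  have rkN: "rk N Y = 0" if "Y \<subseteq> T" for Y using rk_mono[of T Y N, OF fin(2) that N0] n0 by simp
  show ?thesis
  proof (intro allI iffI)
    fix A assume "L A"
    then have A: "A \<subseteq> S \<union> T" "M (A \<inter> S)" "corank_gap S M (A \<inter> S) \<ge> nullity N (A \<inter> T)"
      using L1 unfolding free_product_def by auto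
    have fA: "finite A" using A(1) fin finite_subset by blast
    have "rk M (A \<inter> S) = card (A \<inter> S)" using rk_indep[of "A \<inter> S" M] A(2) fA by blast
    moreover have "card A = card (A \<inter> S) + card (A \<inter> T)" using card_split[OF fA A(1) disj] .
    ultimately show "A \<subseteq> S \<union> T \<and> card A \<le> rk M S"
      using A rkN[of "A \<inter> T"] unfolding corank_gap_def nullity_def by auto
  next
    fix A assume A: "A \<subseteq> S \<union> T \<and> card A \<le> rk M S"
    have fA: "finite A" using A fin finite_subset by blast
    have cA: "card A = card (A \<inter> S) + card (A \<inter> T)" using card_split[of A S T] A disj fA by blast
    have MA: "M (A \<inter> S)" using unif[of "A \<inter> S"] cA A by auto
    have "rk M (A \<inter> S) = card (A \<inter> S)" using rk_indep[of "A \<inter> S" M] MA fA by blast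
    then have "corank_gap S M (A \<inter> S) \<ge> nullity N (A \<inter> T)"
      using rkN[of "A \<inter> T"] cA A unfolding corank_gap_def nullity_def by auto
    then show "L A" using L1 A MA unfolding free_product_def by auto
  qed
qed

theorem corollary6p6:
  fixes S T :: "'a set" and M N P Q L :: "'a set \<Rightarrow> bool"
  assumes "finite S" and "finite T" and "S \<noteq> {}" and "T \<noteq> {}" and "S \<inter> T = {}"
    and "matroid S M" and "matroid T N" and "matroid T P" and "matroid S Q"
    and "L = free_product S M T N" and "L = free_product T P S Q"
  shows "uniform_matroid (S \<union> T) L"
proof -
  note a = assms
  have M0: "M {}" using matroid_props[OF a(6)] by blast
  have N0: "N {}" using matroid_props[OF a(7)] by blast
  have P0: "P {}" using matroid_props[OF a(8)] by blast
  have Q0: "Q {}" using matroid_props[OF a(9)] by blast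
  show ?thesis
  proof (cases "rk N T = 0")
    case True
    show ?thesis using case_zero[OF a(1,2,5,4,6-11) True] unfolding uniform_matroid_def by blast
  next
    case nN: False
    show ?thesis
    proof (cases "rk Q S = 0")
      case True
      have d: "T \<inter> S = {}" using a(5) by blast
      have u: "T \<union> S = S \<union> T" by blast
      show ?thesis using case_zero[of T S P Q M N L, OF a(2,1) d a(3) a(8,9,6,7,11,10) True]
        unfolding uniform_matroid_def u by blast
    next
      case nQ: False
      have MS: "M S"
      proof (rule ccontr)
        assume "\<not> M S"
        from circuit_exists[of S M, OF a(1) M0 this] obtain C c where
          Cc: "C \<subseteq> S" "\<not> M C" "c \<in> C" "M (C - {c})" by blast
        show False using key_rank0[OF a(1,2,5,4,6-11) Cc] nN by simp
      qed
      have PT: "P T"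
      proof (rule ccontr)
        assume "\<not> P T"
        from circuit_exists[of T P, OF a(2) P0 this] obtain C c where
          Cc: "C \<subseteq> T" "\<not> P C" "c \<in> C" "P (C - {c})" by blast
        have d: "T \<inter> S = {}" using a(5) by blast
        show False using key_rank0[of T S P Q M N L, OF a(2,1) d a(3) a(8,9,6,7,11,10) Cc] nQ by simp
      qed
      have rMS: "rk M S = card S" using rk_indep[of S M] MS a(1) by blast
      have rPT: "rk P T = card T" using rk_indep[of T P] PT a(2) by blast
      define R where "R = int (card T) + int (rk Q S) - int (card S)"
      have NY: "N Y \<longleftrightarrow> Y \<subseteq> T \<and> int (card Y) \<le> R" for Y
      proof (cases "Y \<subseteq> T")
        case False
        then show ?thesis using matroid_props(3)[OF a(7)] by blast
      next
        case True
        have fY: "finite Y" using finite_subset[OF True a(2)] .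
        have i1: "(S \<union> Y) \<inter> S = S" using True a(5) by blast
        have i2: "(S \<union> Y) \<inter> T = Y" using True a(5) by blast
        have sub: "S \<union> Y \<subseteq> S \<union> T" using True by blast
        have sub': "S \<union> Y \<subseteq> T \<union> S" using True by blast
        have "L (S \<union> Y) \<longleftrightarrow> rk N Y \<ge> card Y"
          unfolding a(10) free_product_def i1 i2 corank_gap_def nullity_def using sub MS by auto
        also have "\<dots> \<longleftrightarrow> N Y"
        proof
          assume "rk N Y \<ge> card Y"
          then have "rk N Y = card Y" using rk_le_card[of Y N, OF fY N0] by linarith
          then show "N Y" using rk_eq_card[of Y N, OF fY N0] by blast
        next
          assume "N Y"
          then show "rk N Y \<ge> card Y" using rk_indep[of Y N, OF fY] by simp
        qed
        finally have e1: "L (S \<union> Y) \<longleftrightarrow> N Y" .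
        have PY: "P Y" using matroid_props(4)[OF a(8) PT True] .
        have rPY: "rk P Y = card Y" using rk_indep[of Y P] PY fY by blast
        have "L (S \<union> Y) \<longleftrightarrow> int (card Y) \<le> R"
          unfolding a(11) free_product_def i1 i2 corank_gap_def nullity_def R_def
          using sub' PY rPY rPT by auto
        then show ?thesis using e1 True by blast
      qed
      define k where "k = rk N T"
      have R0: "R \<ge> 0" using NY[of "{}"] N0 by simp
      have RT: "R \<le> int (card T)" using rk_le_card[of S Q] a(1) Q0 R_def by simp
      have kR: "int k = R"
      proof -
        obtain Z where Z: "Z \<subseteq> T" "N Z" "card Z = k" using rk_obtain[of T N, OF a(2) N0] k_def by blast
        then have "int k \<le> R" using NY by blast
        moreover obtain Y where Y: "Y \<subseteq> T" "card Y = nat R"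
        proof -
          have "nat R \<le> card T" using RT by (simp add: nat_le_iff)
          from obtain_subset_with_card_n[OF this] that show ?thesis by blast
        qed
        then have "N Y" using NY R0 by simp
        then have "card Y \<le> k" using rk_ge[of T Y N] Y a(2) k_def by blast
        ultimately show ?thesis using Y R0 by simp
      qed
      have NY2: "N Y \<longleftrightarrow> Y \<subseteq> T \<and> card Y \<le> k" for Y using NY kR by auto
      have rkN: "rk N Y = min (card Y) k" if Y: "Y \<subseteq> T" for Y
      proof -
        have fY: "finite Y" using finite_subset[OF Y a(2)] .
        obtain Z where Z: "Z \<subseteq> Y" "N Z" "card Z = rk N Y" using rk_obtain[of Y N, OF fY N0] by blast
        then have "card Z \<le> card Y" "card Z \<le> k" using NY2[of Z] card_mono[OF fY Z(1)] by auto
        then have le: "rk N Y \<le> min (card Y) k" using Z(3) by simp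
        obtain W where W: "W \<subseteq> Y" "card W = min (card Y) k"
          using obtain_subset_with_card_n[of "min (card Y) k" Y] by auto
        then have "N W" using NY2 Y by auto
        then have "min (card Y) k \<le> rk N Y" using rk_ge[of Y W N] fY W by simp
        then show ?thesis using le by simp
      qed
      have "\<forall>A. L A \<longleftrightarrow> A \<subseteq> S \<union> T \<and> card A \<le> card S + k"
      proof
        fix A
        show "L A \<longleftrightarrow> A \<subseteq> S \<union> T \<and> card A \<le> card S + k"
        proof (cases "A \<subseteq> S \<union> T")
          case False then show ?thesis unfolding a(10) free_product_def by blast
        next
          case True
          have fA: "finite A" using finite_subset[OF True] a(1,2) by blast
          have cA: "card A = card (A \<inter> S) + card (A \<inter> T)" using card_split[OF fA True a(5)] .
          have MA: "M (A \<inter> S)" using matroid_props(4)[OF a(6) MS Int_lower2] .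
          have rA: "rk M (A \<inter> S) = card (A \<inter> S)" using rk_indep[of "A \<inter> S" M] MA fA by blast
          have e1: "L A \<longleftrightarrow> int (card S) - int (card (A \<inter> S)) \<ge> int (card (A \<inter> T)) - int (min (card (A \<inter> T)) k)"
            unfolding a(10) free_product_def corank_gap_def nullity_def rA rMS rkN[OF Int_lower2]
            using True MA by blast
          have cS: "card (A \<inter> S) \<le> card S" using card_mono[OF a(1) Int_lower2] .
          have e2: "int (card S) - int (card (A \<inter> S)) \<ge> int (card (A \<inter> T)) - int (min (card (A \<inter> T)) k) \<longleftrightarrow> card A \<le> card S + k"
            using cA cS by (cases "card (A \<inter> T) \<le> k") (simp_all add: min_def, presburger)
          show ?thesis using e1 e2 True by blast
        qed
      qed
      then show ?thesis unfolding uniform_matroid_def by blast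
    qed
  qed
qed

end
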